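(* Let $a<b$, $\alpha,\beta\in(0,1)$, $y_a,y_b\in\mathbb R$, $F\in C^1([a,b]\times\mathbb R^3;\mathbb R)$. Let $y\in C^1([a,b];\mathbb R)$ be a solution (minimizer or maximizer) of $$\mathcal J(y)={}_aI_b^\alpha\big[t\mapsto F(t,y(t),y'(t),{}^C_aD_t^\beta[y](t))\big](b)$$ over functions $y\in C^1([a,b])$ with ${}^C_aD_t^\beta[y]$ continuous on $[a,b]$ and $y(a)=y_a$, $y(b)=y_b$. Write $[y](t)=(t,y(t),y'(t),{}^C_aD_t^\beta[y](t))$ and $g(t)=(b-t)^{\alpha-1}\partial_4F([y](t))$. Assume $g$ has a continuous right Riemann–Liouville derivative ${}_tD_b^\beta[g]$ on $(a,b)$, that $t\mapsto(b-t)^{\alpha-1}\partial_2F([y](t))$ and $t\mapsto\frac{d}{dt}\{(b-t)^{\alpha-1}\partial_3F([y](t))\}$ are continuous on $(a,b)$, that $t\mapsto(b-t)^{\alpha-1}\partial_3F([y](t))$ and ${}_tI_b^{1-\beta}[g]$ are absolutely continuous on $[a,b]$, and that either the kernel $(t,\tau)\mapsto(t-\tau)^{-\beta}/\Gamma(1-\beta)$ is square integrable on $\{a\le\tau<t\le b\}$ and $g\in L_2([a,b])$, or $g$ is continuous on $[a,b]$. Then for all $t\in(a,b)$, $$\partial_2F([y](t))(b-t)^{\alpha-1}-\frac{d}{dt}\Big\{\partial_3F([y](t))(b-t)^{\alpha-1}\Big\}+{}_tD_b^\beta\big[\tau\mapsto(b-\tau)^{\alpha-1}\partial_4F([y](\tau))\big](t)=0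 .$$
   Context: $\partial_iF$ denotes the partial derivative of $F$ in its $i$-th argument. For $\mu\in(0,1)$: ${}_aI_t^\mu[f](t)=\frac1{\Gamma(\mu)}\int_a^t(t-\tau)^{\mu-1}f(\tau)d\tau$, ${}_tI_b^\mu[f](t)=\frac1{\Gamma(\mu)}\int_t^b(\tau-t)^{\mu-1}f(\tau)d\tau$, right Riemann–Liouville derivative ${}_tD_b^\mu[f](t)=-\frac{d}{dt}{}_tI_b^{1-\mu}[f](t)$, left Caputo derivative ${}^C_aD_t^\mu[f](t)={}_aI_t^{1-\mu}[f'](t)$. The notation ${}_aI_b^\alpha[h](b)$ means $\frac1{\Gamma(\alpha)}\int_a^b(b-t)^{\alpha-1}h(t)dt$. *)

theory Defs
  imports "HOL-Analysis.Analysis"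
begin

definition lRL_int :: "real \<Rightarrow> real \<Rightarrow> (real \<Rightarrow> real) \<Rightarrow> real \<Rightarrow> real" where
  "lRL_int a mu f t = (1 / Gamma mu) * integral {a..t} (\<lambda>\<tau>. (t - \<tau>) powr (mu - 1) * f \<tau>)"

definition rRL_int :: "real \<Rightarrow> real \<Rightarrow> (real \<Rightarrow> real) \<Rightarrow> real \<Rightarrow> real" where
  "rRL_int b mu f t = (1 / Gamma mu) * integral {t..b} (\<lambda>\<tau>. (\<tau> - t) powr (mu - 1) * f \<tau>)"

definition rRL_deriv :: "real \<Rightarrow> real \<Rightarrow> (real \<Rightarrow> real) \<Rightarrow> real \<Rightarrow> real" where
  "rRL_deriv b mu f t = - deriv (rRL_int b (1 - mu) f) t"

definition dI :: "real \<Rightarrow> real \<Rightarrow> (real \<Rightarrow> real) \<Rightarrow> real \<Rightarrow> real" where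
  "dI a b y t = vector_derivative y (at t within {a..b})"

definition C1_on :: "real \<Rightarrow> real \<Rightarrow> (real \<Rightarrow> real) \<Rightarrow> bool" where
  "C1_on a b y \<longleftrightarrow> (\<forall>t\<in>{a..b}. y differentiable (at t within {a..b})) \<and> continuous_on {a..b} (dI a b y)"

definition caputo :: "real \<Rightarrow> real \<Rightarrow> real \<Rightarrow> (real \<Rightarrow> real) \<Rightarrow> real \<Rightarrow> real" where
  "caputo a b mu y t = lRL_int a (1 - mu) (dI a b y) t"

definition Jfun :: "real \<Rightarrow> real \<Rightarrow> real \<Rightarrow> real \<Rightarrow> (real \<Rightarrow> real \<Rightarrow> real \<Rightarrow> real \<Rightarrow> real)
    \<Rightarrow> (real \<Rightarrow> real) \<Rightarrow> real" where
  "Jfun a b alpha beta F y =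
     lRL_int a alpha (\<lambda>t. F t (y t) (dI a b y t) (caputo a b beta y t)) b"

definition admissible :: "real \<Rightarrow> real \<Rightarrow> real \<Rightarrow> real \<Rightarrow> real \<Rightarrow> (real \<Rightarrow> real) \<Rightarrow> bool" where
  "admissible a b beta ya yb y \<longleftrightarrow>
     C1_on a b y \<and> continuous_on {a..b} (caputo a b beta y) \<and> y a = ya \<and> y b = yb"

definition abs_cont_on :: "real \<Rightarrow> real \<Rightarrow> (real \<Rightarrow> real) \<Rightarrow> bool" where
  "abs_cont_on a b f \<longleftrightarrow>
     (\<forall>\<epsilon>>0. \<exists>\<delta>>0. \<forall>(n::nat) (c::nat \<Rightarrow> real) d.
        (\<forall>i<n. a \<le> c i \<and> c i \<le> d i \<and> d i \<le> b) \<and>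
        (\<forall>i<n. \<forall>j<n. i \<noteq> j \<longrightarrow> d i \<le> c j \<or> d j \<le> c i) \<and>
        (\<Sum>i<n. d i - c i) < \<delta> \<longrightarrow>
        (\<Sum>i<n. \<bar>f (d i) - f (c i)\<bar>) < \<epsilon>)"

end

theory Submission
  imports Defs
begin

lemma integral_flip:
  fixes f :: "real \<Rightarrow> real"
  shows "integral {a..t} f = integral {0..t-a} (\<lambda>s. f (t - s))"
proof -
  have "integral {0..t-a} (\<lambda>s. f (t - s)) = integral {0..t-a} (\<lambda>s. (\<lambda>x. f (t + x)) (-s))"
    by simp
  also have "\<dots> = integral {-0..-(-(t-a))} (\<lambda>s. (\<lambda>x. f (t + x)) (-s))" by simp
  also have "\<dots> = integral {-(t-a)..0} (\<lambda>x. f (t + x))"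
    by (rule Henstock_Kurzweil_Integration.integral_reflect_real[where f="\<lambda>x. f (t + x)"])
  also have "\<dots> = integral {a-t..0} (f \<circ> (+) t)" by (simp add: o_def)
  also have "\<dots> = integral {a..t} f"
    by (subst integral_shift_Icc_real) (simp add: add.commute)
  finally show ?thesis ..
qed

lemma has_integral_flip:
  fixes f :: "real \<Rightarrow> real"
  shows "(f has_integral I) {a..t} \<longleftrightarrow> ((\<lambda>s. f (t - s)) has_integral I) {0..t-a}"
proof -
  have "((\<lambda>s. f (t - s)) has_integral I) {0..t-a} \<longleftrightarrow> ((\<lambda>s. (\<lambda>x. f (t + x)) (-s)) has_integral I) {-0..-(-(t-a))}"
    by simp
  also have "\<dots> \<longleftrightarrow> ((\<lambda>x. f (t + x)) has_integral I) {-(t-a)..0}"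
    by (rule has_integral_reflect_real)
  also have "\<dots> \<longleftrightarrow> ((f \<circ> (+) t) has_integral I) {a-t..0}" by (simp add: o_def)
  also have "\<dots> \<longleftrightarrow> (f has_integral I) {a..t}"
    by (subst has_integral_shift_Icc_real) (simp add: add.commute)
  finally show ?thesis ..
qed

lemma left_kernel_integrable:
  fixes mu a t :: real
  assumes "0 < mu" "a \<le> t"
  shows "(\<lambda>\<tau>. (t - \<tau>) powr (mu - 1)) integrable_on {a..t}"
proof -
  have "((\<lambda>s. s powr (mu - 1)) has_integral ((t-a) powr (mu-1+1) / (mu-1+1))) {0..t-a}"
    using assms by (intro has_integral_powr_from_0) auto
  then have "((\<lambda>\<tau>. (t - \<tau>) powr (mu - 1)) has_integral ((t-a) powr (mu-1+1) / (mu-1+1))) {a..t}"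
    by (subst has_integral_flip) simp
  then show ?thesis by blast
qed

lemma right_kernel_integrable:
  fixes mu b t :: real
  assumes "0 < mu" "t \<le> b"
  shows "(\<lambda>\<tau>. (\<tau> - t) powr (mu - 1)) integrable_on {t..b}"
proof -
  have "((\<lambda>s. s powr (mu - 1)) has_integral ((b-t) powr (mu-1+1) / (mu-1+1))) {0..b-t}"
    using assms by (intro has_integral_powr_from_0) auto
  then have "(((\<lambda>s. s powr (mu - 1)) \<circ> (+) (-t)) has_integral ((b-t) powr (mu-1+1) / (mu-1+1))) {t..b}"
    by (subst has_integral_shift_Icc_real) simp
  then show ?thesis by (auto simp: o_def integrable_on_def)
qed

lemma kernel_cont_absint:
  fixes k G :: "real \<Rightarrow> real"
  assumes "k integrable_on {a..b}" "\<And>x. x \<in> {a..b} \<Longrightarrow> 0 \<le> k x" "continuous_on {a..b} G"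
  shows "(\<lambda>x. k x * G x) absolutely_integrable_on {a..b}"
proof -
  have "(\<lambda>x. G x * k x) absolutely_integrable_on {a..b}"
  proof (rule absolutely_integrable_bounded_measurable_product_real)
    show "G \<in> borel_measurable (lebesgue_on {a..b})"
      using assms(3) by (intro continuous_imp_measurable_on_sets_lebesgue) auto
    show "bounded (G ` {a..b})" using assms(3) compact_continuous_image compact_imp_bounded by blast
    show "k absolutely_integrable_on {a..b}" using assms by (intro nonnegative_absolutely_integrable_1)
  qed auto
  then show ?thesis by (simp add: mult.commute)
qed

lemma absint_lborel:
  fixes f :: "real \<Rightarrow> real"
  assumes "f absolutely_integrable_on S"
    and "(\<lambda>x. indicator S x * f x) \<in> borel_measurable borel"
  shows "integrable lborel (\<lambda>x. indicator S x * f x)"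
    "integral\<^sup>L lborel (\<lambda>x. indicator S x * f x) = integral S f"
proof -
  have m: "(\<lambda>x. indicator S x * f x) \<in> lborel \<rightarrow>\<^sub>M borel" using assms(2) by simp
  have "integrable lebesgue (\<lambda>x. indicator S x * f x)"
    using assms(1) unfolding absolutely_integrable_on_def set_integrable_def by simp
  then show i: "integrable lborel (\<lambda>x. indicator S x * f x)"
    using integrable_completion[OF m] by simp
  have "integral\<^sup>L lborel (\<lambda>x. indicator S x * f x) = integral UNIV (\<lambda>x. indicator S x * f x)"
    using integral_lborel[OF i] by simp
  also have "\<dots> = integral UNIV (\<lambda>x. if x \<in> S then f x else 0)"
    by (rule integral_cong) (simp add: indicator_def)
  also have "\<dots> = integral S f" by (simp add: integral_restrict_UNIV)
  finally show "integral\<^sup>L lborel (\<lambda>x. indicator S x * f x) = integral S f" .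
qed

lemma K_meas:
  fixes a b alpha beta :: real and phi g :: "real \<Rightarrow> real"
  assumes "phi \<in> borel_measurable borel" "g \<in> borel_measurable borel"
  shows "(\<lambda>(t, \<tau>). indicator {(t,\<tau>). a \<le> \<tau> \<and> \<tau> \<le> t \<and> t \<le> b} (t, \<tau>) * ((t - \<tau>) powr (-beta) * phi \<tau> * g t)) \<in> borel_measurable (lborel \<Otimes>\<^sub>M lborel)"
proof -
  have c: "closed {(t::real,\<tau>::real). a \<le> \<tau> \<and> \<tau> \<le> t \<and> t \<le> b}"
  proof -
    have "{(t::real,\<tau>::real). a \<le> \<tau> \<and> \<tau> \<le> t \<and> t \<le> b} = {p. a \<le> snd p} \<inter> {p. snd p \<le> fst p} \<inter> {p. fst p \<le> b}"
      by auto
    moreover have "closed \<dots>"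
      by (intro closed_Int closed_Collect_le continuous_intros)
    ultimately show ?thesis by simp
  qed
  have sb: "sets (lborel \<Otimes>\<^sub>M lborel) = sets (borel :: (real \<times> real) measure)"
    by (metis borel_prod sets_lborel sets_pair_measure_cong)
  have m1: "(\<lambda>p::real\<times>real. fst p - snd p) \<in> borel_measurable borel"
    by (intro borel_measurable_continuous_onI continuous_intros)
  have ms: "(snd :: real\<times>real \<Rightarrow> real) \<in> borel_measurable borel"
    by (intro borel_measurable_continuous_onI continuous_intros)
  have mf: "(fst :: real\<times>real \<Rightarrow> real) \<in> borel_measurable borel"
    by (intro borel_measurable_continuous_onI continuous_intros)
  have m2: "(\<lambda>p::real\<times>real. phi (snd p)) \<in> borel_measurable borel"
    using measurable_compose[OF ms assms(1)] by (simp add: o_def)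
  have m3: "(\<lambda>p::real\<times>real. g (fst p)) \<in> borel_measurable borel"
    using measurable_compose[OF mf assms(2)] by (simp add: o_def)
  have m4: "(\<lambda>p::real\<times>real. (fst p - snd p) powr (-beta)) \<in> borel_measurable borel"
    using powr_real_measurable[OF m1 measurable_const] by simp
  have m5: "indicator {(t::real,\<tau>::real). a \<le> \<tau> \<and> \<tau> \<le> t \<and> t \<le> b} \<in> borel_measurable (borel :: (real \<times> real) measure)"
    using c by (intro borel_measurable_indicator) (simp add: borel_closed)
  have "(\<lambda>p::real\<times>real. indicator {(t,\<tau>). a \<le> \<tau> \<and> \<tau> \<le> t \<and> t \<le> b} p * ((fst p - snd p) powr (-beta) * phi (snd p) * g (fst p))) \<in> borel_measurable borel"
    using m2 m3 m4 m5 by (intro borel_measurable_times) auto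
  then have "(\<lambda>p::real\<times>real. indicator {(t,\<tau>). a \<le> \<tau> \<and> \<tau> \<le> t \<and> t \<le> b} p * ((fst p - snd p) powr (-beta) * phi (snd p) * g (fst p))) \<in> borel_measurable (lborel \<Otimes>\<^sub>M lborel)"
    using measurable_cong_sets[OF sb refl] by blast
  then show ?thesis by (simp add: case_prod_beta')
qed



lemma ae_to_hk:
  fixes f h :: "real \<Rightarrow> real"
  assumes f: "integrable lborel f" "f \<in> borel_measurable borel"
    and ae: "AE x in lborel. f x = indicator S x * h x"
  shows "integral\<^sup>L lborel f = integral S h" "(\<lambda>x. indicator S x * h x) integrable_on UNIV"
proof -
  let ?h = "\<lambda>x. indicator S x * h x"
  have fm: "f \<in> borel_measurable lebesgue" using f(2) by (simp add: measurable_completion)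
  have ae': "AE x in lebesgue. f x = ?h x" using ae by (rule AE_completion)
  have hm: "?h \<in> borel_measurable lebesgue" by (rule borel_measurable_AE[OF fm ae'])
  have fi: "integrable lebesgue f" using f integrable_completion[of f lborel] by simp
  have hi: "integrable lebesgue ?h" using integrable_cong_AE[OF fm hm ae'] fi by simp
  have "integral\<^sup>L lborel f = integral\<^sup>L lebesgue f" using f(2) by (simp add: integral_completion)
  also have "\<dots> = integral\<^sup>L lebesgue ?h" by (rule integral_cong_AE[OF fm hm ae'])
  also have "\<dots> = integral UNIV ?h" using integral_lebesgue[OF hi] by simp
  also have "\<dots> = integral UNIV (\<lambda>x. if x \<in> S then h x else 0)"
    by (rule integral_cong) (simp add: indicator_def)
  also have "\<dots> = integral S h" by (simp add: integral_restrict_UNIV)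
  finally show "integral\<^sup>L lborel f = integral S h" .
  show "?h integrable_on UNIV" using integrable_on_lebesgue[OF hi] .
qed

lemma kernel_phi_absint:
  fixes phi :: "real \<Rightarrow> real"
  assumes b: "0 < beta" "beta < 1" and pc: "continuous_on {a..b} phi" and t: "t \<le> b"
  shows "(\<lambda>\<tau>. (t - \<tau>) powr (-beta) * phi \<tau>) absolutely_integrable_on {a..t}"
proof (cases "a \<le> t")
  case True
  have "(\<lambda>\<tau>. (t - \<tau>) powr (1 - beta - 1)) integrable_on {a..t}"
    using left_kernel_integrable[of "1-beta" a t] True b by simp
  then have k: "(\<lambda>\<tau>. (t - \<tau>) powr (-beta)) integrable_on {a..t}" by simp
  show ?thesis
    by (rule kernel_cont_absint[OF k]) (use pc t in \<open>auto intro: continuous_on_subset\<close>)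
next
  case False
  then show ?thesis by simp
qed

lemma kernel_bound:
  fixes phi :: "real \<Rightarrow> real"
  assumes b: "0 < beta" "beta < 1" and pc: "continuous_on {a..b} phi"
  shows "\<exists>C\<ge>0. \<forall>t\<in>{a..b}. integral {a..t} (\<lambda>\<tau>. \<bar>(t - \<tau>) powr (-beta) * phi \<tau>\<bar>) \<le> C"
proof -
  obtain M where M: "\<And>x. x \<in> {a..b} \<Longrightarrow> \<bar>phi x\<bar> \<le> M"
    using compact_imp_bounded[OF compact_continuous_image[OF pc compact_Icc]]
    unfolding bounded_iff by (metis atLeastAtMost_iff imageI real_norm_def)
  have M0: "0 \<le> max M 0" by simp
  define C where "C = max M 0 * ((b - a) powr (1 - beta) / (1 - beta))"
  show ?thesis
  proof (intro exI[of _ C] conjI ballI)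
    show "0 \<le> C" unfolding C_def using b by (intro mult_nonneg_nonneg divide_nonneg_nonneg) auto
    fix t assume t: "t \<in> {a..b}"
    have hk: "((\<lambda>\<tau>. (t - \<tau>) powr (-beta)) has_integral ((t-a) powr (1 - beta) / (1 - beta))) {a..t}"
    proof -
      have "((\<lambda>s. s powr (-beta)) has_integral ((t-a) powr (-beta+1) / (-beta+1))) {0..t-a}"
        using t b by (intro has_integral_powr_from_0) auto
      then show ?thesis by (subst has_integral_flip) (simp add: add.commute)
    qed
    have "integral {a..t} (\<lambda>\<tau>. \<bar>(t - \<tau>) powr (-beta) * phi \<tau>\<bar>) \<le> integral {a..t} (\<lambda>\<tau>. (t - \<tau>) powr (-beta) * max M 0)"
    proof (rule integral_le)
      show "(\<lambda>\<tau>. \<bar>(t - \<tau>) powr (-beta) * phi \<tau>\<bar>) integrable_on {a..t}"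
        using kernel_phi_absint[OF b pc, of t] t unfolding absolutely_integrable_on_def by auto
      show "(\<lambda>\<tau>. (t - \<tau>) powr (-beta) * max M 0) integrable_on {a..t}"
        using hk by (intro integrable_on_mult_left) blast
      fix x assume x: "x \<in> {a..t}"
      have "\<bar>phi x\<bar> \<le> max M 0" using M[of x] x t by auto
      then show "\<bar>(t - x) powr (-beta) * phi x\<bar> \<le> (t - x) powr (-beta) * max M 0"
        by (simp add: abs_mult mult_left_mono)
    qed
    also have "\<dots> = ((t-a) powr (1 - beta) / (1 - beta)) * max M 0"
      using hk by (simp add: integral_unique)
    also have "\<dots> \<le> C"
    proof -
      have pm: "(t - a) powr (1 - beta) \<le> (b - a) powr (1 - beta)" using t b by (intro powr_mono2) auto
      then have "(t - a) powr (1 - beta) / (1 - beta) \<le> (b - a) powr (1 - beta) / (1 - beta)"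
        using b by (intro divide_right_mono) auto
      then have h: "max M 0 * ((t - a) powr (1 - beta) / (1 - beta)) \<le> max M 0 * ((b - a) powr (1 - beta) / (1 - beta))"
        by (rule mult_left_mono[OF _ M0])
      show ?thesis unfolding C_def using h by (metis mult.commute)
    qed
    finally show "integral {a..t} (\<lambda>\<tau>. \<bar>(t - \<tau>) powr (-beta) * phi \<tau>\<bar>) \<le> C" .
  qed
qed

lemma frac_fubini:
  fixes a b alpha beta :: real and phi G :: "real \<Rightarrow> real"
  assumes ab: "a < b" and b1: "0 < beta" and b2: "beta < 1" and al: "0 < alpha"
    and pc: "continuous_on UNIV phi" and Gc: "continuous_on UNIV G"
  shows "integral {a..b} (\<lambda>t. ((b - t) powr (alpha - 1) * G t) * integral {a..t} (\<lambda>\<tau>. (t - \<tau>) powr (-beta) * phi \<tau>))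
       = integral {a..b} (\<lambda>\<tau>. phi \<tau> * integral {\<tau>..b} (\<lambda>t. (t - \<tau>) powr (-beta) * ((b - t) powr (alpha - 1) * G t)))"
proof -
  define g where "g = (\<lambda>t. (b - t) powr (alpha - 1) * G t)"
  define T where "T = {(t::real,\<tau>::real). a \<le> \<tau> \<and> \<tau> \<le> t \<and> t \<le> b}"
  define K where "K = (\<lambda>t \<tau>. indicator T (t, \<tau>) * ((t - \<tau>) powr (-beta) * phi \<tau> * g t))"
  have phim[measurable]: "phi \<in> borel_measurable borel" using pc by (rule borel_measurable_continuous_onI)
  have Gm[measurable]: "G \<in> borel_measurable borel" using Gc by (rule borel_measurable_continuous_onI)
  have gm[measurable]: "g \<in> borel_measurable borel" unfolding g_def by measurable
  have Km: "case_prod K \<in> borel_measurable (lborel \<Otimes>\<^sub>M lborel)"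
    using K_meas[OF phim gm, of a b beta] unfolding K_def T_def by simp
  have pcab: "continuous_on {a..b} phi" using pc by (rule continuous_on_subset) auto
  have g_abs: "g absolutely_integrable_on {a..b}"
  proof -
    have "(\<lambda>t. (b - t) powr (alpha - 1)) integrable_on {a..b}"
      using left_kernel_integrable[of alpha a b] al ab by simp
    then show ?thesis unfolding g_def
      by (rule kernel_cont_absint) (use Gc in \<open>auto intro: continuous_on_subset\<close>)
  qed
  have gi: "integrable lborel (\<lambda>t. indicator {a..b} t * g t)"
    by (rule absint_lborel(1)[OF g_abs]) measurable
  have Kt: "K t = (\<lambda>\<tau>. (indicator {a..t} \<tau> * ((t - \<tau>) powr (-beta) * phi \<tau>)) * (indicator {a..b} t * g t))" for t
    by (auto simp: K_def T_def indicator_def fun_eq_iff)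
  have kabs: "(\<lambda>\<tau>. (t - \<tau>) powr (-beta) * phi \<tau>) absolutely_integrable_on {a..t}" if "t \<le> b" for t
    using kernel_phi_absint[OF b1 b2 pcab that] .
  have kmeas: "(\<lambda>\<tau>. indicator {a..t} \<tau> * ((t - \<tau>) powr (-beta) * phi \<tau>)) \<in> borel_measurable borel" for t
    by measurable
  have inner_t: "(\<integral>\<tau>. K t \<tau> \<partial>lborel) = indicator {a..b} t * (g t * integral {a..t} (\<lambda>\<tau>. (t - \<tau>) powr (-beta) * phi \<tau>))" for t
  proof (cases "t \<in> {a..b}")
    case True
    have "(\<integral>\<tau>. K t \<tau> \<partial>lborel) = (\<integral>\<tau>. indicator {a..t} \<tau> * ((t - \<tau>) powr (-beta) * phi \<tau>) \<partial>lborel) * (indicator {a..b} t * g t)"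
      unfolding Kt by simp
    also have "\<dots> = integral {a..t} (\<lambda>\<tau>. (t - \<tau>) powr (-beta) * phi \<tau>) * (indicator {a..b} t * g t)"
      using absint_lborel(2)[OF kabs kmeas] True by simp
    finally show ?thesis using True by simp
  next
    case False
    then show ?thesis unfolding Kt by (simp add: indicator_def)
  qed
  have integ2: "AE t in lborel. integrable lborel (\<lambda>\<tau>. K t \<tau>)"
  proof (rule AE_I2)
    fix t
    show "integrable lborel (\<lambda>\<tau>. K t \<tau>)"
    proof (cases "t \<in> {a..b}")
      case True
      have "integrable lborel (\<lambda>\<tau>. indicator {a..t} \<tau> * ((t - \<tau>) powr (-beta) * phi \<tau>))"
        using absint_lborel(1)[OF kabs kmeas] True by simp
      then show ?thesis unfolding Kt by (rule integrable_mult_left)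
    next
      case False
      then show ?thesis unfolding Kt by (simp add: indicator_def)
    qed
  qed
  obtain C where C0: "0 \<le> C" and C: "\<And>t. t \<in> {a..b} \<Longrightarrow> integral {a..t} (\<lambda>\<tau>. \<bar>(t - \<tau>) powr (-beta) * phi \<tau>\<bar>) \<le> C"
    using kernel_bound[OF b1 b2 pcab] by blast
  have integ1: "integrable lborel (\<lambda>t. \<integral>\<tau>. norm (K t \<tau>) \<partial>lborel)"
  proof (rule Bochner_Integration.integrable_bound)
    show "integrable lborel (\<lambda>t. C * (indicator {a..b} t * g t))"
      using gi by (rule integrable_mult_right)
    show "(\<lambda>t. \<integral>\<tau>. norm (K t \<tau>) \<partial>lborel) \<in> borel_measurable lborel"
      using Km by measurable
    show "AE t in lborel. norm (\<integral>\<tau>. norm (K t \<tau>) \<partial>lborel) \<le> norm (C * (indicator {a..b} t * g t))"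
    proof (rule AE_I2)
      fix t
      show "norm (\<integral>\<tau>. norm (K t \<tau>) \<partial>lborel) \<le> norm (C * (indicator {a..b} t * g t))"
      proof (cases "t \<in> {a..b}")
        case True
        have kabs': "(\<lambda>\<tau>. \<bar>(t - \<tau>) powr (-beta) * phi \<tau>\<bar>) absolutely_integrable_on {a..t}"
          using kabs[of t] True unfolding absolutely_integrable_on_def by auto
        have "(\<lambda>\<tau>. norm (K t \<tau>)) = (\<lambda>\<tau>. (indicator {a..t} \<tau> * \<bar>(t - \<tau>) powr (-beta) * phi \<tau>\<bar>) * \<bar>g t\<bar>)"
          using True unfolding Kt by (auto simp: indicator_def abs_mult fun_eq_iff)
        then have e1: "(\<integral>\<tau>. norm (K t \<tau>) \<partial>lborel) = (\<integral>\<tau>. indicator {a..t} \<tau> * \<bar>(t - \<tau>) powr (-beta) * phi \<tau>\<bar> \<partial>lborel) * \<bar>g t\<bar>"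
          by simp
        have km': "(\<lambda>\<tau>. indicator {a..t} \<tau> * \<bar>(t - \<tau>) powr (-beta) * phi \<tau>\<bar>) \<in> borel_measurable borel"
          by measurable
        have eq: "(\<integral>\<tau>. norm (K t \<tau>) \<partial>lborel) = integral {a..t} (\<lambda>\<tau>. \<bar>(t - \<tau>) powr (-beta) * phi \<tau>\<bar>) * \<bar>g t\<bar>"
          using absint_lborel(2)[OF kabs' km'] e1 by simp
        have nn: "0 \<le> integral {a..t} (\<lambda>\<tau>. \<bar>(t - \<tau>) powr (-beta) * phi \<tau>\<bar>)"
          by (rule integral_nonneg) (use kabs' in \<open>auto simp: absolutely_integrable_on_def\<close>)
        have "norm (\<integral>\<tau>. norm (K t \<tau>) \<partial>lborel) = integral {a..t} (\<lambda>\<tau>. \<bar>(t - \<tau>) powr (-beta) * phi \<tau>\<bar>) * \<bar>g t\<bar>"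
          using eq nn by simp
        also have "\<dots> \<le> C * \<bar>g t\<bar>" using C[OF True] by (rule mult_right_mono) simp
        also have "\<dots> = norm (C * (indicator {a..b} t * g t))" using True C0 by (simp add: abs_mult)
        finally show ?thesis .
      next
        case False
        then show ?thesis unfolding Kt by (auto simp: indicator_def)
      qed
    qed
  qed
  have Kint: "integrable (lborel \<Otimes>\<^sub>M lborel) (case_prod K)"
    by (rule lborel_pair.Fubini_integrable[of "case_prod K"]) (use Km integ1 integ2 in auto)
  have fub: "(\<integral>\<tau>. (\<integral>t. K t \<tau> \<partial>lborel) \<partial>lborel) = (\<integral>t. (\<integral>\<tau>. K t \<tau> \<partial>lborel) \<partial>lborel)"
    by (rule lborel_pair.Fubini_integral[OF Kint])
  have L: "(\<integral>t. (\<integral>\<tau>. K t \<tau> \<partial>lborel) \<partial>lborel) = integral {a..b} (\<lambda>t. g t * integral {a..t} (\<lambda>\<tau>. (t - \<tau>) powr (-beta) * phi \<tau>))"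
  proof (rule ae_to_hk(1))
    show "integrable lborel (\<lambda>t. \<integral>\<tau>. K t \<tau> \<partial>lborel)" by (rule lborel_pair.integrable_fst[OF Kint])
    show "(\<lambda>t. \<integral>\<tau>. K t \<tau> \<partial>lborel) \<in> borel_measurable borel"
      using Km by measurable
    show "AE t in lborel. (\<integral>\<tau>. K t \<tau> \<partial>lborel) = indicator {a..b} t * (g t * integral {a..t} (\<lambda>\<tau>. (t - \<tau>) powr (-beta) * phi \<tau>))"
      by (rule AE_I2) (rule inner_t)
  qed
  have R: "(\<integral>\<tau>. (\<integral>t. K t \<tau> \<partial>lborel) \<partial>lborel) = integral {a..b} (\<lambda>\<tau>. phi \<tau> * integral {\<tau>..b} (\<lambda>t. (t - \<tau>) powr (-beta) * g t))"
  proof (rule ae_to_hk(1))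
    show "integrable lborel (\<lambda>\<tau>. \<integral>t. K t \<tau> \<partial>lborel)" by (rule lborel_pair.integrable_snd[OF Kint])
    show "(\<lambda>\<tau>. \<integral>t. K t \<tau> \<partial>lborel) \<in> borel_measurable borel"
      using Km by measurable
    show "AE \<tau> in lborel. (\<integral>t. K t \<tau> \<partial>lborel) = indicator {a..b} \<tau> * (phi \<tau> * integral {\<tau>..b} (\<lambda>t. (t - \<tau>) powr (-beta) * g t))"
      using lborel_pair.AE_integrable_snd[OF Kint]
    proof eventually_elim
      fix \<tau> assume int: "integrable lborel (\<lambda>t. K t \<tau>)"
      have Ktau: "(\<lambda>t. K t \<tau>) = (\<lambda>t. (indicator {\<tau>..b} t * ((t - \<tau>) powr (-beta) * g t)) * (indicator {a..b} \<tau> * phi \<tau>))"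
        by (auto simp: K_def T_def indicator_def fun_eq_iff)
      show "(\<integral>t. K t \<tau> \<partial>lborel) = indicator {a..b} \<tau> * (phi \<tau> * integral {\<tau>..b} (\<lambda>t. (t - \<tau>) powr (-beta) * g t))"
      proof (cases "\<tau> \<in> {a..b} \<and> phi \<tau> \<noteq> 0")
        case True
        have "integrable lborel (\<lambda>t. (indicator {\<tau>..b} t * ((t - \<tau>) powr (-beta) * g t)) * (indicator {a..b} \<tau> * phi \<tau>) * inverse (phi \<tau>))"
          using int unfolding Ktau by (rule integrable_mult_left)
        then have i2: "integrable lborel (\<lambda>t. indicator {\<tau>..b} t * ((t - \<tau>) powr (-beta) * g t))"
          using True by simp
        have m2: "(\<lambda>t. indicator {\<tau>..b} t * ((t - \<tau>) powr (-beta) * g t)) \<in> borel_measurable borel"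
          by measurable
        have "(\<integral>t. K t \<tau> \<partial>lborel) = (\<integral>t. indicator {\<tau>..b} t * ((t - \<tau>) powr (-beta) * g t) \<partial>lborel) * (indicator {a..b} \<tau> * phi \<tau>)"
          unfolding Ktau by simp
        also have "(\<integral>t. indicator {\<tau>..b} t * ((t - \<tau>) powr (-beta) * g t) \<partial>lborel) = integral {\<tau>..b} (\<lambda>t. (t - \<tau>) powr (-beta) * g t)"
          by (rule ae_to_hk(1)[OF i2 m2]) simp
        finally show ?thesis by simp
      next
        case False
        then show ?thesis unfolding Ktau by (auto simp: indicator_def)
      qed
    qed
  qed
  show ?thesis using fub L R unfolding g_def by simp
qed

lemma maxsq_deriv: "((\<lambda>x::real. (max 0 x)^2) has_real_derivative 2 * max 0 x) (at x)"
proof (cases "x = 0")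
  case True
  have e: "(max 0 z)^2 - (max 0 x)^2 = max 0 z * (z - x)" for z :: real
    using True by (cases "z \<ge> 0") (auto simp: power2_eq_square)
  have "isCont (\<lambda>z::real. max 0 z) x" by (intro continuous_intros)
  then have "\<exists>g. (\<forall>z. (max 0 z)^2 - (max 0 x)^2 = g z * (z - x)) \<and> isCont g x \<and> g x = 2 * max 0 x"
    using True e by (intro exI[of _ "\<lambda>z. max 0 z"]) auto
  then show ?thesis by (simp add: CARAT_DERIV)
next
  case False
  show ?thesis
  proof (cases "x > 0")
    case True
    have "((\<lambda>x::real. x^2) has_real_derivative 2 * x) (at x)"
      by (auto intro!: derivative_eq_intros)
    then have "((\<lambda>x::real. x^2) has_real_derivative 2 * max 0 x) (at x)" using True by simp
    then show ?thesis
      by (rule has_field_derivative_transform_within_open[where S="{0<..}"]) (use True in auto)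
  next
    case False': False
    then have "x < 0" using False by simp
    have "((\<lambda>x::real. 0) has_real_derivative 0) (at x)" by simp
    then have "((\<lambda>x::real. 0) has_real_derivative 2 * max 0 x) (at x)" using \<open>x < 0\<close> by simp
    then show ?thesis
      by (rule has_field_derivative_transform_within_open[where S="{..<0}"]) (use \<open>x < 0\<close> in auto)
  qed
qed

definition bump :: "real \<Rightarrow> real \<Rightarrow> real \<Rightarrow> real" where
  "bump c d t = (max 0 ((t - c) * (d - t)))^2"

definition bump' :: "real \<Rightarrow> real \<Rightarrow> real \<Rightarrow> real" where
  "bump' c d t = 2 * max 0 ((t - c) * (d - t)) * (c + d - 2 * t)"

lemma bump_deriv: "(bump c d has_real_derivative bump' c d t) (at t)"
proof -
  have d1: "((\<lambda>t. (t - c) * (d - t)) has_real_derivative ((d - t) - (t - c))) (at t)"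
    by (auto intro!: derivative_eq_intros)
  have "((\<lambda>t. (max 0 ((t - c) * (d - t)))^2) has_real_derivative
          2 * max 0 ((t - c) * (d - t)) * ((d - t) - (t - c))) (at t)"
    by (rule DERIV_chain2[OF maxsq_deriv d1])
  then show ?thesis unfolding bump_def bump'_def
    by (rule DERIV_cong) (simp add: algebra_simps)
qed

lemma bump_cont: "continuous_on S (bump c d)"
  unfolding bump_def by (intro continuous_intros)

lemma bump'_cont: "continuous_on S (bump' c d)"
  unfolding bump'_def by (intro continuous_intros)

lemma bump_prod_nonpos: "(t::real) \<le> c \<or> d \<le> t \<Longrightarrow> c \<le> d \<Longrightarrow> (t - c) * (d - t) \<le> 0"
proof -
  assume h: "t \<le> c \<or> d \<le> t" "c \<le> d"
  show ?thesis
  proof (cases "t \<le> c")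
    case True show ?thesis by (rule mult_nonpos_nonneg) (use h True in auto)
  next
    case False show ?thesis by (rule mult_nonneg_nonpos) (use h False in auto)
  qed
qed

lemma bump_zero: "t \<le> c \<or> d \<le> t \<Longrightarrow> c \<le> d \<Longrightarrow> bump c d t = 0"
  unfolding bump_def using bump_prod_nonpos[of t c d] by simp

lemma bump'_zero: "t \<le> c \<or> d \<le> t \<Longrightarrow> c \<le> d \<Longrightarrow> bump' c d t = 0"
  unfolding bump'_def using bump_prod_nonpos[of t c d] by simp

lemma bump_pos: "c < t \<Longrightarrow> t < d \<Longrightarrow> bump c d t > 0"
  unfolding bump_def by (auto simp: max_def)

lemma bump_dI:
  assumes "a < b" "t \<in> {a..b}"
  shows "vector_derivative (bump c d) (at t within {a..b}) = bump' c d t"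
proof -
  have hv: "(bump c d has_vector_derivative bump' c d t) (at t within {a..b})"
    using bump_deriv[of c d t] by (simp add: has_real_derivative_iff_has_vector_derivative has_vector_derivative_at_within)
  then show ?thesis using vector_derivative_within_closed_interval[OF assms(1) _ hv] assms(2) by auto
qed

lemma caputo_cont:
  fixes phi :: "real \<Rightarrow> real"
  assumes ab: "a < b" and b1: "0 < beta" and b2: "beta < 1"
    and pc: "continuous_on UNIV phi" and p0: "\<And>\<tau>. \<tau> \<le> a \<Longrightarrow> phi \<tau> = 0"
  shows "continuous_on {a..b} (\<lambda>t. integral {a..t} (\<lambda>\<tau>. (t - \<tau>) powr (-beta) * phi \<tau>))"
proof -
  define L where "L = b - a"
  define Phi where "Phi = (\<lambda>t. integral {0..L} (\<lambda>s. s powr (-beta) * phi (t - s)))"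
  have kint: "(\<lambda>s. s powr (-beta)) integrable_on {0..L}"
    using ab b2 b1 unfolding L_def by (intro integrable_on_powr_from_0) auto
  have absi: "(\<lambda>s. s powr (-beta) * phi (t - s)) absolutely_integrable_on {0..L}" for t
    by (rule kernel_cont_absint[OF kint]) (auto intro!: continuous_intros continuous_on_compose2[OF pc])
  have eq: "integral {a..t} (\<lambda>\<tau>. (t - \<tau>) powr (-beta) * phi \<tau>) = Phi t" if t: "t \<in> {a..b}" for t
  proof -
    have "integral {a..t} (\<lambda>\<tau>. (t - \<tau>) powr (-beta) * phi \<tau>) = integral {0..t-a} (\<lambda>s. s powr (-beta) * phi (t - s))"
      by (subst integral_flip) simp
    also have "\<dots> = integral {0..t-a} (\<lambda>s. s powr (-beta) * phi (t - s)) + integral {t-a..L} (\<lambda>s. s powr (-beta) * phi (t - s))"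
    proof -
      have "integral {t-a..L} (\<lambda>s. s powr (-beta) * phi (t - s)) = integral {t-a..L} (\<lambda>s. 0)"
        by (rule integral_cong) (use p0 in auto)
      then show ?thesis by simp
    qed
    also have "\<dots> = Phi t" unfolding Phi_def
      using t absi[of t] unfolding L_def
      by (intro Henstock_Kurzweil_Integration.integral_combine) (auto simp: absolutely_integrable_on_def)
    finally show ?thesis .
  qed
  obtain M where M: "\<And>x. x \<in> {a - L..b} \<Longrightarrow> \<bar>phi x\<bar> \<le> M"
    using compact_imp_bounded[OF compact_continuous_image[OF continuous_on_subset[OF pc] compact_Icc]]
    unfolding bounded_iff by (metis atLeastAtMost_iff imageI real_norm_def subset_UNIV)
  have "continuous_on {a..b} Phi"
  proof (rule continuous_on_sequentiallyI)
    fix u t0 assume u: "\<forall>n. u n \<in> {a..b}" and t0: "t0 \<in> {a..b}" and lim: "u \<longlonglongrightarrow> t0"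
    have "(\<lambda>n. integral {0..L} (\<lambda>s. s powr (-beta) * phi (u n - s))) \<longlonglongrightarrow> integral {0..L} (\<lambda>s. s powr (-beta) * phi (t0 - s))"
    proof (rule dominated_convergence(2))
      show "(\<lambda>s. s powr (-beta) * phi (u n - s)) integrable_on {0..L}" for n
        using absi[of "u n"] by (simp add: absolutely_integrable_on_def)
      show "(\<lambda>s. s powr (-beta) * M) integrable_on {0..L}"
        using kint by (rule integrable_on_mult_left)
      fix n s assume s: "s \<in> {0..L}"
      have "u n - s \<in> {a - L..b}" using u[rule_format, of n] s unfolding L_def by auto
      then show "norm (s powr (-beta) * phi (u n - s)) \<le> s powr (-beta) * M"
        using M by (auto simp: abs_mult intro!: mult_left_mono)
    next
      fix s assume s: "s \<in> {0..L}"
      have "(\<lambda>n. phi (u n - s)) \<longlonglongrightarrow> phi (t0 - s)"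
        using pc lim by (intro continuous_on_tendsto_compose[OF pc] tendsto_intros) auto
      then show "(\<lambda>n. s powr (-beta) * phi (u n - s)) \<longlonglongrightarrow> s powr (-beta) * phi (t0 - s)"
        by (intro tendsto_intros)
    qed
    then show "(\<lambda>n. Phi (u n)) \<longlonglongrightarrow> Phi t0" unfolding Phi_def .
  qed
  then show ?thesis by (rule continuous_on_eq) (simp add: eq)
qed

lemma first_variation:
  fixes a b alpha :: real
    and Fp :: "real \<times> real \<times> real \<times> real \<Rightarrow> real"
    and F1 F2 F3 F4 :: "real \<times> real \<times> real \<times> real \<Rightarrow> real"
    and P :: "real \<Rightarrow> real \<times> real \<times> real \<times> real"
    and h2 h3 h4 :: "real \<Rightarrow> real"
  assumes ab: "a < b" and al: "0 < alpha"
    and FC1: "\<And>q. q \<in> {a..b} \<times> UNIV \<Longrightarrow>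
        (Fp has_derivative (\<lambda>(k1, k2, k3, k4). F1 q * k1 + F2 q * k2 + F3 q * k3 + F4 q * k4))
        (at q within {a..b} \<times> UNIV)"
    and Fc: "continuous_on ({a..b} \<times> UNIV) F2" "continuous_on ({a..b} \<times> UNIV) F3"
            "continuous_on ({a..b} \<times> UNIV) F4"
    and Pc: "continuous_on {a..b} P" and Pfst: "\<And>t. fst (P t) = t"
    and hc: "continuous_on {a..b} h2" "continuous_on {a..b} h3" "continuous_on {a..b} h4"
    and ext: "(\<forall>e. integral {a..b} (\<lambda>t. (b - t) powr (alpha - 1) * Fp (P t))
                  \<le> integral {a..b} (\<lambda>t. (b - t) powr (alpha - 1) * Fp (P t + e *\<^sub>R (0, h2 t, h3 t, h4 t)))) \<or>
              (\<forall>e. integral {a..b} (\<lambda>t. (b - t) powr (alpha - 1) * Fp (P t))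
                  \<ge> integral {a..b} (\<lambda>t. (b - t) powr (alpha - 1) * Fp (P t + e *\<^sub>R (0, h2 t, h3 t, h4 t))))"
  shows "integral {a..b} (\<lambda>t. (b - t) powr (alpha - 1) * (F2 (P t) * h2 t + F3 (P t) * h3 t + F4 (P t) * h4 t)) = 0"
proof -
  define w where "w = (\<lambda>t::real. (b - t) powr (alpha - 1))"
  define H where "H = (\<lambda>t. (0::real, h2 t, h3 t, h4 t))"
  define Gm where "Gm = (\<lambda>t (s::real). P t + s *\<^sub>R H t)"
  define psi where "psi = (\<lambda>t s. Fp (Gm t s))"
  define D where "D = (\<lambda>t s. F2 (Gm t s) * h2 t + F3 (Gm t s) * h3 t + F4 (Gm t s) * h4 t)"
  define I where "I = (\<lambda>e. integral {a..b} (\<lambda>t. w t * psi t e))"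
  have Gm0: "Gm t 0 = P t" for t unfolding Gm_def by simp
  have GmT: "Gm t s \<in> {a..b} \<times> UNIV" if "t \<in> {a..b}" for t s
  proof -
    have "fst (Gm t s) = t" unfolding Gm_def H_def using Pfst[of t] by simp
    then show ?thesis using that by (cases "Gm t s") auto
  qed
  have Hc: "continuous_on {a..b} H" unfolding H_def using hc by (intro continuous_intros) auto
  have psi_deriv: "((psi t) has_real_derivative D t s) (at s)" if t: "t \<in> {a..b}" for t s
  proof -
    have g: "((\<lambda>s. Gm t s) has_derivative (\<lambda>h. h *\<^sub>R H t)) (at s within UNIV)"
      unfolding Gm_def by (auto intro!: derivative_eq_intros)
    have d: "((\<lambda>s. Fp (Gm t s)) has_derivative
           (\<lambda>h. (\<lambda>(k1, k2, k3, k4). F1 (Gm t s) * k1 + F2 (Gm t s) * k2 + F3 (Gm t s) * k3 + F4 (Gm t s) * k4) (h *\<^sub>R H t)))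
           (at s within UNIV)"
      by (rule has_derivative_in_compose2[OF FC1 _ UNIV_I g]) (assumption, rule image_subsetI, rule GmT[OF t])
    have "((\<lambda>s. Fp (Gm t s)) has_derivative (*) (D t s)) (at s)"
      by (rule has_derivative_eq_rhs[OF d]) (simp add: fun_eq_iff H_def D_def algebra_simps)
    then show ?thesis unfolding psi_def has_field_derivative_def .
  qed
  have Gmc: "continuous_on ({a..b} \<times> {-1..1}) (\<lambda>p. Gm (fst p) (snd p))"
  proof -
    have "continuous_on ({a..b} \<times> {-1..1}) (\<lambda>p. P (fst p))"
      by (rule continuous_on_compose2[OF Pc]) (auto intro!: continuous_intros)
    moreover have "continuous_on ({a..b} \<times> {-1..1}) (\<lambda>p. H (fst p))"
      by (rule continuous_on_compose2[OF Hc]) (auto intro!: continuous_intros)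
    ultimately show ?thesis unfolding Gm_def by (intro continuous_intros) auto
  qed
  have Gmc1: "continuous_on {a..b} (\<lambda>t. Gm t s)" for s
    unfolding Gm_def using Pc Hc by (intro continuous_intros) auto
  have Fpc: "continuous_on ({a..b} \<times> UNIV) Fp"
    using FC1 has_derivative_continuous continuous_on_eq_continuous_within by blast
  have Fic: "continuous_on ({a..b} \<times> {-1..1}) (\<lambda>p. Fi (Gm (fst p) (snd p)))"
    if "continuous_on ({a..b} \<times> UNIV) Fi" for Fi
    by (rule continuous_on_compose2[OF that Gmc]) (rule image_subsetI, rule GmT, auto)
  have hc': "continuous_on ({a..b} \<times> {-1..1}) (\<lambda>p. hi (fst p))" if "continuous_on {a..b} hi" for hi :: "real \<Rightarrow> real"
    by (rule continuous_on_compose2[OF that]) (auto intro!: continuous_intros)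
  have Dc: "continuous_on ({a..b} \<times> {-1..1}) (\<lambda>p. D (fst p) (snd p))"
    unfolding D_def using Fic[OF Fc(1)] Fic[OF Fc(2)] Fic[OF Fc(3)] hc'[OF hc(1)] hc'[OF hc(2)] hc'[OF hc(3)]
    by (intro continuous_intros) auto
  obtain B where B: "\<And>t s. t \<in> {a..b} \<Longrightarrow> s \<in> {-1..1} \<Longrightarrow> \<bar>D t s\<bar> \<le> B"
  proof -
    have "bounded ((\<lambda>p. D (fst p) (snd p)) ` ({a..b} \<times> {-1..1}))"
      by (intro compact_imp_bounded compact_continuous_image Dc compact_Times) auto
    then obtain B where "\<forall>x \<in> (\<lambda>p. D (fst p) (snd p)) ` ({a..b} \<times> {-1..1}). norm x \<le> B"
      unfolding bounded_iff by blast
    then show ?thesis using that[of B] by force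
  qed
  have psic: "continuous_on {a..b} (\<lambda>t. psi t s)" for s
    unfolding psi_def by (rule continuous_on_compose2[OF Fpc Gmc1]) (rule image_subsetI, rule GmT, assumption)
  have wi: "w integrable_on {a..b}"
    unfolding w_def using left_kernel_integrable[of alpha a b] al ab by simp
  have w0: "\<And>t. 0 \<le> w t" unfolding w_def by simp
  have wci: "(\<lambda>t. w t * G t) integrable_on {a..b}" if "continuous_on {a..b} G" for G
    using kernel_cont_absint[OF wi _ that] w0 by (simp add: absolutely_integrable_on_def)
  have qbound: "\<bar>(psi t e - psi t 0) / e\<bar> \<le> B" if t: "t \<in> {a..b}" and e: "e \<noteq> 0" "\<bar>e\<bar> \<le> 1" for t e
  proof (cases "e > 0")
    case True
    obtain z where z: "0 < z" "z < e" "psi t e - psi t 0 = (e - 0) * D t z"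
      using MVT2[OF True, of "psi t" "D t"] psi_deriv[OF t] by blast
    have "\<bar>D t z\<bar> \<le> B" using B[OF t, of z] z e by auto
    then show ?thesis using z True by simp
  next
    case False
    then have en: "e < 0" using e by simp
    obtain z where z: "e < z" "z < 0" "psi t 0 - psi t e = (0 - e) * D t z"
      using MVT2[OF en, of "psi t" "D t"] psi_deriv[OF t] by blast
    have "\<bar>D t z\<bar> \<le> B" using B[OF t, of z] z e by auto
    moreover have "(psi t e - psi t 0) / e = D t z" using z en by (simp add: field_simps)
    ultimately show ?thesis by simp
  qed
  have conv: "(\<lambda>n. (I (sg / real (Suc n)) - I 0) / (sg / real (Suc n)))
               \<longlonglongrightarrow> integral {a..b} (\<lambda>t. w t * D t 0)" if sg: "sg = 1 \<or> sg = -1" for sg :: real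
  proof -
    define ep where "ep = (\<lambda>n::nat. sg / real (Suc n))"
    have ep0: "ep n \<noteq> 0" for n unfolding ep_def using sg by auto
    have ep1: "\<bar>ep n\<bar> \<le> 1" for n unfolding ep_def using sg by (auto simp: divide_le_eq)
    have eplim: "ep \<longlonglongrightarrow> 0"
    proof -
      have "(\<lambda>n. sg * inverse (real (Suc n))) \<longlonglongrightarrow> sg * 0"
        by (intro tendsto_intros LIMSEQ_inverse_real_of_nat)
      then show ?thesis unfolding ep_def by (simp add: divide_inverse)
    qed
    have epat: "filterlim ep (at 0) sequentially"
      using eplim ep0 by (intro filterlim_atI) auto
    define f where "f = (\<lambda>n t. w t * ((psi t (ep n) - psi t 0) / ep n))"
    have "(\<lambda>n. integral {a..b} (f n)) \<longlonglongrightarrow> integral {a..b} (\<lambda>t. w t * D t 0)"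
    proof (rule dominated_convergence(2))
      fix n
      have "continuous_on {a..b} (\<lambda>t. (psi t (ep n) - psi t 0) / ep n)"
        using psic ep0 by (intro continuous_intros) auto
      then show "f n integrable_on {a..b}" unfolding f_def by (rule wci)
    next
      show "(\<lambda>t. w t * B) integrable_on {a..b}" using wi by (rule integrable_on_mult_left)
    next
      fix n t assume t: "t \<in> {a..b}"
      have "\<bar>(psi t (ep n) - psi t 0) / ep n\<bar> \<le> B" by (rule qbound[OF t ep0 ep1])
      then have "w t * \<bar>(psi t (ep n) - psi t 0) / ep n\<bar> \<le> w t * B"
        using w0[of t] by (rule mult_left_mono)
      then show "norm (f n t) \<le> w t * B" unfolding f_def using w0[of t]
        by (simp add: abs_mult)
    next
      fix t assume t: "t \<in> {a..b}"
      have lim: "((\<lambda>h. (psi t h - psi t 0) / h) \<longlongrightarrow> D t 0) (at 0)"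
        using psi_deriv[OF t, of 0] by (simp add: DERIV_def)
      have "(\<lambda>n. (psi t (ep n) - psi t 0) / ep n) \<longlonglongrightarrow> D t 0"
        using filterlim_compose[OF lim epat] by simp
      then show "(\<lambda>n. f n t) \<longlonglongrightarrow> w t * D t 0" unfolding f_def by (intro tendsto_intros)
    qed
    moreover have "integral {a..b} (f n) = (I (ep n) - I 0) / ep n" for n
    proof -
      have "integral {a..b} (f n) = integral {a..b} (\<lambda>t. (w t * psi t (ep n) - w t * psi t 0) / ep n)"
        unfolding f_def by (rule integral_cong) (simp add: algebra_simps diff_divide_distrib)
      also have "\<dots> = (integral {a..b} (\<lambda>t. w t * psi t (ep n)) - integral {a..b} (\<lambda>t. w t * psi t 0)) / ep n"
        by (simp add: integral_diff wci[OF psic])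
      finally show ?thesis unfolding I_def .
    qed
    ultimately show ?thesis unfolding ep_def by simp
  qed
  define L where "L = integral {a..b} (\<lambda>t. w t * D t 0)"
  have IP: "I e = integral {a..b} (\<lambda>t. (b - t) powr (alpha - 1) * Fp (P t + e *\<^sub>R (0, h2 t, h3 t, h4 t)))" for e
    unfolding I_def w_def psi_def Gm_def H_def ..
  have I0: "I 0 = integral {a..b} (\<lambda>t. (b - t) powr (alpha - 1) * Fp (P t))"
    unfolding I_def w_def psi_def Gm_def by simp
  have cp: "(\<lambda>n. (I (1 / real (Suc n)) - I 0) / (1 / real (Suc n))) \<longlonglongrightarrow> L"
    using conv[of 1] unfolding L_def by simp
  have cm: "(\<lambda>n. (I (-1 / real (Suc n)) - I 0) / (-1 / real (Suc n))) \<longlonglongrightarrow> L"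
    using conv[of "-1"] unfolding L_def by simp
  have ext': "(\<forall>e. I 0 \<le> I e) \<or> (\<forall>e. I e \<le> I 0)"
    using ext unfolding I0[symmetric] IP[symmetric] by auto
  have L0: "L = 0"
  proof (cases "\<forall>e. I 0 \<le> I e")
    case True
    have "0 \<le> L"
    proof (rule LIMSEQ_le_const[OF cp])
      show "\<exists>N. \<forall>n\<ge>N. 0 \<le> (I (1 / real (Suc n)) - I 0) / (1 / real (Suc n))"
        using True by (auto intro!: divide_nonneg_pos)
    qed
    moreover have "L \<le> 0"
    proof (rule LIMSEQ_le_const2[OF cm])
      show "\<exists>N. \<forall>n\<ge>N. (I (-1 / real (Suc n)) - I 0) / (-1 / real (Suc n)) \<le> 0"
        using True by (auto intro!: divide_nonneg_neg)
    qed
    ultimately show ?thesis by simp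
  next
    case False
    then have True': "\<forall>e. I e \<le> I 0" using ext' by auto
    have "L \<le> 0"
    proof (rule LIMSEQ_le_const2[OF cp])
      show "\<exists>N. \<forall>n\<ge>N. (I (1 / real (Suc n)) - I 0) / (1 / real (Suc n)) \<le> 0"
      proof (intro exI[of _ 0] allI impI)
        fix n :: nat
        have "I (1 / real (Suc n)) - I 0 \<le> 0" using True' by simp
        then show "(I (1 / real (Suc n)) - I 0) / (1 / real (Suc n)) \<le> 0"
          by (rule divide_nonpos_pos) simp
      qed
    qed
    moreover have "0 \<le> L"
    proof (rule LIMSEQ_le_const[OF cm])
      show "\<exists>N. \<forall>n\<ge>N. 0 \<le> (I (-1 / real (Suc n)) - I 0) / (-1 / real (Suc n))"
      proof (intro exI[of _ 0] allI impI)
        fix n :: nat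
        have "I (-1 / real (Suc n)) - I 0 \<le> 0" using True' by simp
        then show "0 \<le> (I (-1 / real (Suc n)) - I 0) / (-1 / real (Suc n))"
          by (rule divide_nonpos_neg) simp
      qed
    qed
    ultimately show ?thesis by simp
  qed
  then show ?thesis unfolding L_def w_def D_def Gm0 .
qed

lemma integral_sub_interval:
  fixes f :: "real \<Rightarrow> real"
  assumes "a \<le> c" "c \<le> d" "d \<le> b" "\<And>t. t \<in> {a..b} \<Longrightarrow> t \<notin> {c..d} \<Longrightarrow> f t = 0"
  shows "integral {a..b} f = integral {c..d} f"
proof -
  have "integral {a..b} f = integral {a..b} (\<lambda>t. if t \<in> {c..d} then f t else 0)"
    by (rule integral_cong) (use assms in auto)
  also have "\<dots> = integral ({c..d} \<inter> {a..b}) f" by (rule integral_restrict_Int)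
  also have "{c..d} \<inter> {a..b} = {c..d}" using assms by auto
  finally show ?thesis .
qed

lemma ibp_zero:
  fixes f f' eta eta' :: "real \<Rightarrow> real"
  assumes cd: "c \<le> d"
    and fd: "\<And>x. x \<in> {c..d} \<Longrightarrow> (f has_real_derivative f' x) (at x)"
    and ed: "\<And>x. x \<in> {c..d} \<Longrightarrow> (eta has_real_derivative eta' x) (at x)"
    and f'c: "continuous_on {c..d} f'" and e'c: "continuous_on {c..d} eta'"
    and e0: "eta c = 0" "eta d = 0"
  shows "integral {c..d} (\<lambda>x. f x * eta' x) = - integral {c..d} (\<lambda>x. f' x * eta x)"
proof -
  have fc: "continuous_on {c..d} f"
    using fd by (intro continuous_at_imp_continuous_on ballI DERIV_isCont) auto
  have ec: "continuous_on {c..d} eta"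
    using ed by (intro continuous_at_imp_continuous_on ballI DERIV_isCont) auto
  have i1: "((\<lambda>x. f x * eta' x) has_integral integral {c..d} (\<lambda>x. f x * eta' x)) {c..d}"
    using fc e'c by (intro integrable_integral integrable_continuous_real continuous_intros)
  have "((\<lambda>x. f' x * eta x) has_integral (- integral {c..d} (\<lambda>x. f x * eta' x))) {c..d}"
  proof (rule integration_by_parts[OF bounded_bilinear_mult cd fc ec])
    show "(f has_vector_derivative f' x) (at x)" if "x \<in> {c..d}" for x
      using fd[OF that] by (simp add: has_real_derivative_iff_has_vector_derivative)
    show "(eta has_vector_derivative eta' x) (at x)" if "x \<in> {c..d}" for x
      using ed[OF that] by (simp add: has_real_derivative_iff_has_vector_derivative)
    show "((\<lambda>x. f x * eta' x) has_integral f d * eta d - f c * eta c - - integral {c..d} (\<lambda>x. f x * eta' x)) {c..d}"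
      using i1 e0 by simp
  qed
  then show ?thesis by (simp add: integral_unique)
qed

theorem mainTheorem7:
  fixes a b alpha beta ya yb :: real
    and F :: "real \<Rightarrow> real \<Rightarrow> real \<Rightarrow> real \<Rightarrow> real"
    and F1 F2 F3 F4 :: "real \<times> real \<times> real \<times> real \<Rightarrow> real"
    and y :: "real \<Rightarrow> real"
  assumes ab: "a < b"
    and alpha: "0 < alpha" "alpha < 1"
    and beta: "0 < beta" "beta < 1"
    and F_C1: "\<And>t x v w. t \<in> {a..b} \<Longrightarrow>
        ((\<lambda>(t, x, v, w). F t x v w) has_derivative
          (\<lambda>(h1, h2, h3, h4). F1 (t, x, v, w) * h1 + F2 (t, x, v, w) * h2
                              + F3 (t, x, v, w) * h3 + F4 (t, x, v, w) * h4))
        (at (t, x, v, w) within {a..b} \<times> UNIV)"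
    and F_partials_cont: "continuous_on ({a..b} \<times> UNIV) F1" "continuous_on ({a..b} \<times> UNIV) F2"
        "continuous_on ({a..b} \<times> UNIV) F3" "continuous_on ({a..b} \<times> UNIV) F4"
    and y_adm: "admissible a b beta ya yb y"
    and y_extremal:
        "(\<forall>z. admissible a b beta ya yb z \<longrightarrow> Jfun a b alpha beta F y \<le> Jfun a b alpha beta F z) \<or>
         (\<forall>z. admissible a b beta ya yb z \<longrightarrow> Jfun a b alpha beta F y \<ge> Jfun a b alpha beta F z)"
    and g_RL: "\<forall>t\<in>{a<..<b}. rRL_int b (1 - beta)
                 (\<lambda>\<tau>. (b - \<tau>) powr (alpha - 1) * F4 (\<tau>, y \<tau>, dI a b y \<tau>, caputo a b beta y \<tau>))
                 differentiable (at t)"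
    and g_RL_cont: "continuous_on {a<..<b} (rRL_deriv b beta
                 (\<lambda>\<tau>. (b - \<tau>) powr (alpha - 1) * F4 (\<tau>, y \<tau>, dI a b y \<tau>, caputo a b beta y \<tau>)))"
    and F2_cont: "continuous_on {a<..<b}
                 (\<lambda>t. (b - t) powr (alpha - 1) * F2 (t, y t, dI a b y t, caputo a b beta y t))"
    and F3_diff: "\<forall>t\<in>{a<..<b}.
                 (\<lambda>s. (b - s) powr (alpha - 1) * F3 (s, y s, dI a b y s, caputo a b beta y s))
                 differentiable (at t)"
    and F3_deriv_cont: "continuous_on {a<..<b}
                 (deriv (\<lambda>s. (b - s) powr (alpha - 1) * F3 (s, y s, dI a b y s, caputo a b beta y s)))"
    and F3_AC: "abs_cont_on a b
                 (\<lambda>t. (b - t) powr (alpha - 1) * F3 (t, y t, dI a b y t, caputo a b beta y t))"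
    and g_int_AC: "abs_cont_on a b (rRL_int b (1 - beta)
                 (\<lambda>\<tau>. (b - \<tau>) powr (alpha - 1) * F4 (\<tau>, y \<tau>, dI a b y \<tau>, caputo a b beta y \<tau>)))"
    and kernel_or_cont:
        "((\<lambda>(t, \<tau>). ((t - \<tau>) powr (- beta) / Gamma (1 - beta))\<^sup>2)
              integrable_on {(t, \<tau>). a \<le> \<tau> \<and> \<tau> < t \<and> t \<le> b} \<and>
          (\<lambda>\<tau>. (b - \<tau>) powr (alpha - 1) * F4 (\<tau>, y \<tau>, dI a b y \<tau>, caputo a b beta y \<tau>))
              measurable_on {a..b} \<and>
          (\<lambda>\<tau>. ((b - \<tau>) powr (alpha - 1) * F4 (\<tau>, y \<tau>, dI a b y \<tau>, caputo a b beta y \<tau>))\<^sup>2)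
              integrable_on {a..b})
         \<or> continuous_on {a..b}
              (\<lambda>\<tau>. (b - \<tau>) powr (alpha - 1) * F4 (\<tau>, y \<tau>, dI a b y \<tau>, caputo a b beta y \<tau>))"
  shows "\<forall>t\<in>{a<..<b}.
     F2 (t, y t, dI a b y t, caputo a b beta y t) * (b - t) powr (alpha - 1)
     - deriv (\<lambda>s. F3 (s, y s, dI a b y s, caputo a b beta y s) * (b - s) powr (alpha - 1)) t
     + rRL_deriv b beta
         (\<lambda>\<tau>. (b - \<tau>) powr (alpha - 1) * F4 (\<tau>, y \<tau>, dI a b y \<tau>, caputo a b beta y \<tau>)) t = 0"
proof -
  define dy where "dy = dI a b y"
  define cy where "cy = caputo a b beta y"
  define P where "P = (\<lambda>t. (t, y t, dy t, cy t))"
  define w where "w = (\<lambda>t::real. (b - t) powr (alpha - 1))"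
  define g where "g = (\<lambda>\<tau>. (b - \<tau>) powr (alpha - 1) * F4 (\<tau>, y \<tau>, dI a b y \<tau>, caputo a b beta y \<tau>))"
  define R where "R = rRL_int b (1 - beta) g"
  define h3 where "h3 = (\<lambda>s. (b - s) powr (alpha - 1) * F3 (s, y s, dI a b y s, caputo a b beta y s))"
  define E where "E = (\<lambda>t. F2 (t, y t, dI a b y t, caputo a b beta y t) * (b - t) powr (alpha - 1)
     - deriv (\<lambda>s. F3 (s, y s, dI a b y s, caputo a b beta y s) * (b - s) powr (alpha - 1)) t
     + rRL_deriv b beta g t)"
  define Fp where "Fp = (\<lambda>(t, x, v, w). F t x v w)"
  have PF: "Fi (P t) = Fi (t, y t, dI a b y t, caputo a b beta y t)" for Fi :: "real \<times> real \<times> real \<times> real \<Rightarrow> real" and t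
    unfolding P_def dy_def cy_def ..
  have C1: "C1_on a b y" and cyc: "continuous_on {a..b} cy" and yaa: "y a = ya" and ybb: "y b = yb"
    using y_adm unfolding admissible_def cy_def by auto
  have ydiff: "\<And>t. t \<in> {a..b} \<Longrightarrow> y differentiable (at t within {a..b})"
    and dyc: "continuous_on {a..b} dy"
    using C1 unfolding C1_on_def dy_def by auto
  have yder: "(y has_vector_derivative dy t) (at t within {a..b})" if "t \<in> {a..b}" for t
    using ydiff[OF that] unfolding dy_def dI_def by (simp add: vector_derivative_works)
  have yc: "continuous_on {a..b} y"
    using ydiff differentiable_imp_continuous_within continuous_on_eq_continuous_within by blast
  have Pc: "continuous_on {a..b} P"
    unfolding P_def using yc dyc cyc by (intro continuous_intros) auto
  have PT: "P t \<in> {a..b} \<times> UNIV" if "t \<in> {a..b}" for t using that unfolding P_def by auto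
  have FPc: "continuous_on {a..b} (\<lambda>t. Fi (P t))" if "continuous_on ({a..b} \<times> UNIV) Fi" for Fi
    by (rule continuous_on_compose2[OF that Pc]) (rule image_subsetI, rule PT, assumption)
  have G1pos: "Gamma (1 - beta) > 0" using beta by simp
  have Gapos: "Gamma alpha > 0" using alpha by simp
  have wi: "w integrable_on {a..b}"
    unfolding w_def using left_kernel_integrable[of alpha a b] alpha ab by simp
  have w0: "\<And>t. 0 \<le> w t" unfolding w_def by simp
  have wci: "(\<lambda>t. w t * G t) integrable_on {a..b}" if "continuous_on {a..b} G" for G
    using kernel_cont_absint[OF wi _ that] w0 by (simp add: absolutely_integrable_on_def)
  have h3eq: "(\<lambda>s. F3 (s, y s, dI a b y s, caputo a b beta y s) * (b - s) powr (alpha - 1)) = h3"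
    unfolding h3_def by (simp add: fun_eq_iff mult.commute)
  have F2w: "continuous_on {a<..<b} (\<lambda>t. F2 (t, y t, dI a b y t, caputo a b beta y t) * (b - t) powr (alpha - 1))"
    using F2_cont by (simp add: mult.commute)
  have dh3c: "continuous_on {a<..<b} (deriv h3)" using F3_deriv_cont unfolding h3_def .
  have rdc: "continuous_on {a<..<b} (rRL_deriv b beta g)" using g_RL_cont unfolding g_def .
  have Ec: "continuous_on {a<..<b} E"
    unfolding E_def h3eq by (intro continuous_on_add continuous_on_diff F2w dh3c rdc)
  have "\<forall>t\<in>{a<..<b}. E t = 0"
  proof (rule ccontr)
    assume "\<not> (\<forall>t\<in>{a<..<b}. E t = 0)"
    then obtain t0 where t0: "t0 \<in> {a<..<b}" and Et0: "E t0 \<noteq> 0" by auto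
    have "continuous (at t0 within {a<..<b}) E"
      using Ec t0 continuous_on_eq_continuous_within by blast
    then obtain d0 where d0: "d0 > 0"
      and d0E: "\<And>x. x \<in> {a<..<b} \<Longrightarrow> dist x t0 < d0 \<Longrightarrow> dist (E x) (E t0) < \<bar>E t0\<bar>"
      unfolding continuous_within_eps_delta using Et0 by (metis zero_less_abs_iff)
    define del where "del = min d0 (min (t0 - a) (b - t0)) / 2"
    have del0: "del > 0" unfolding del_def using d0 t0 by auto
    define c where "c = t0 - del"
    define d where "d = t0 + del"
    have dl: "del \<le> (t0 - a) / 2" "del \<le> (b - t0) / 2" "del < d0"
      unfolding del_def using d0 by auto
    have acd: "a < c" "c < t0" "t0 < d" "d < b" unfolding c_def d_def using dl del0 t0 by auto
    have Esign: "E t * E t0 > 0" if "t \<in> {c..d}" for t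
    proof -
      have "t \<in> {a<..<b}" using that acd by auto
      moreover have "dist t t0 < d0" using that dl unfolding c_def d_def dist_real_def by auto
      ultimately have "\<bar>E t - E t0\<bar> < \<bar>E t0\<bar>" using d0E by (simp add: dist_real_def)
      then show ?thesis
        by (cases "E t0 > 0") (auto simp: abs_if zero_less_mult_iff split: if_splits)
    qed
    define eta where "eta = bump c d"
    define eta' where "eta' = bump' c d"
    define Ceta where "Ceta = caputo a b beta eta"
    have etac: "continuous_on S eta" for S unfolding eta_def by (rule bump_cont)
    have eta'c: "continuous_on S eta'" for S unfolding eta'_def by (rule bump'_cont)
    have etaa: "eta a = 0" "eta b = 0" unfolding eta_def using acd by (auto intro!: bump_zero)
    have eta'0: "eta' \<tau> = 0" if "\<tau> \<le> a" for \<tau> unfolding eta'_def using acd that by (auto intro!: bump'_zero)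
    have etaD: "(eta has_real_derivative eta' t) (at t)" for t unfolding eta_def eta'_def by (rule bump_deriv)
    have dIeta: "dI a b eta t = eta' t" if "t \<in> {a..b}" for t
      unfolding dI_def eta_def eta'_def using bump_dI[OF ab that] .
    have kabs: "(\<lambda>\<tau>. (t - \<tau>) powr (-beta) * phi \<tau>) absolutely_integrable_on {a..t}"
      if "continuous_on {a..b} phi" "t \<le> b" for phi t
      using kernel_phi_absint[OF beta that] .
    have capf: "caputo a b beta u t = 1 / Gamma (1 - beta) * integral {a..t} (\<lambda>\<tau>. (t - \<tau>) powr (-beta) * dI a b u \<tau>)" for u t
      unfolding caputo_def lRL_int_def by simp
    have Ceta_eq: "Ceta t = 1 / Gamma (1 - beta) * integral {a..t} (\<lambda>\<tau>. (t - \<tau>) powr (-beta) * eta' \<tau>)"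
      if "t \<in> {a..b}" for t
      unfolding Ceta_def capf using that by (intro arg_cong2[where f="(*)"] refl integral_cong) (auto simp: dIeta)
    have Cetac: "continuous_on {a..b} Ceta"
    proof -
      have "continuous_on {a..b} (\<lambda>t. 1 / Gamma (1 - beta) * integral {a..t} (\<lambda>\<tau>. (t - \<tau>) powr (-beta) * eta' \<tau>))"
        using caputo_cont[OF ab beta eta'c eta'0] by (intro continuous_intros)
      then show ?thesis by (rule continuous_on_eq) (simp add: Ceta_eq)
    qed
    define z where "z = (\<lambda>e t. y t + e * eta t)"
    have zder: "(z e has_vector_derivative dy t + e * eta' t) (at t within {a..b})" if "t \<in> {a..b}" for e t
    proof -
      have "((\<lambda>t. e * eta t) has_real_derivative e * eta' t) (at t within {a..b})"
        using etaD[of t] by (intro DERIV_cmult) (simp add: has_field_derivative_at_within)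
      then have "((\<lambda>t. e * eta t) has_vector_derivative e * eta' t) (at t within {a..b})"
        by (simp add: has_real_derivative_iff_has_vector_derivative)
      then show ?thesis unfolding z_def by (intro has_vector_derivative_add yder that)
    qed
    have dIz: "dI a b (z e) t = dy t + e * eta' t" if "t \<in> {a..b}" for e t
      unfolding dI_def using vector_derivative_within_closed_interval[OF ab _ zder[OF that]] that by auto
    have capz: "caputo a b beta (z e) t = cy t + e * Ceta t" if t: "t \<in> {a..b}" for e t
    proof -
      have i1: "(\<lambda>\<tau>. (t - \<tau>) powr (-beta) * dy \<tau>) integrable_on {a..t}"
        using kabs[OF dyc] t by (auto simp: absolutely_integrable_on_def)
      have i2: "(\<lambda>\<tau>. (t - \<tau>) powr (-beta) * eta' \<tau>) integrable_on {a..t}"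
        using kabs[OF eta'c] t by (auto simp: absolutely_integrable_on_def)
      have "integral {a..t} (\<lambda>\<tau>. (t - \<tau>) powr (-beta) * dI a b (z e) \<tau>)
          = integral {a..t} (\<lambda>\<tau>. (t - \<tau>) powr (-beta) * dy \<tau> + e * ((t - \<tau>) powr (-beta) * eta' \<tau>))"
        by (rule integral_cong) (use t in \<open>auto simp: dIz algebra_simps\<close>)
      also have "\<dots> = integral {a..t} (\<lambda>\<tau>. (t - \<tau>) powr (-beta) * dy \<tau>) + e * integral {a..t} (\<lambda>\<tau>. (t - \<tau>) powr (-beta) * eta' \<tau>)"
        using integral_add[OF i1 integrable_on_mult_right[OF i2, of e]] by simp
      finally show ?thesis
        unfolding capf[of "z e"] Ceta_eq[OF t] cy_def capf[of y] dy_def[symmetric]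
        by (simp add: algebra_simps)
    qed
    have adm: "admissible a b beta ya yb (z e)" for e
    proof -
      have "\<forall>t\<in>{a..b}. z e differentiable (at t within {a..b})"
        using zder differentiableI_vector by blast
      moreover have "continuous_on {a..b} (dI a b (z e))"
      proof -
        have "continuous_on {a..b} (\<lambda>t. dy t + e * eta' t)" using dyc eta'c by (intro continuous_intros)
        then show ?thesis by (rule continuous_on_eq) (simp add: dIz)
      qed
      moreover have "continuous_on {a..b} (caputo a b beta (z e))"
      proof -
        have "continuous_on {a..b} (\<lambda>t. cy t + e * Ceta t)" using cyc Cetac by (intro continuous_intros)
        then show ?thesis by (rule continuous_on_eq) (simp add: capz)
      qed
      ultimately show ?thesis unfolding admissible_def C1_on_def using yaa ybb etaa by (simp add: z_def)
    qed
    have Jz: "Jfun a b alpha beta F (z e) = 1 / Gamma alpha *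
        integral {a..b} (\<lambda>t. (b - t) powr (alpha - 1) * Fp (P t + e *\<^sub>R (0, eta t, eta' t, Ceta t)))" for e
      unfolding Jfun_def lRL_int_def
      by (intro arg_cong2[where f="(*)"] refl integral_cong) (simp add: dIz[unfolded z_def] capz[unfolded z_def] P_def Fp_def z_def)
    have Jy: "Jfun a b alpha beta F y = 1 / Gamma alpha * integral {a..b} (\<lambda>t. (b - t) powr (alpha - 1) * Fp (P t))"
      unfolding Jfun_def lRL_int_def P_def Fp_def dy_def cy_def by simp
    have ext: "(\<forall>e. integral {a..b} (\<lambda>t. (b - t) powr (alpha - 1) * Fp (P t))
                  \<le> integral {a..b} (\<lambda>t. (b - t) powr (alpha - 1) * Fp (P t + e *\<^sub>R (0, eta t, eta' t, Ceta t)))) \<or>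
              (\<forall>e. integral {a..b} (\<lambda>t. (b - t) powr (alpha - 1) * Fp (P t))
                  \<ge> integral {a..b} (\<lambda>t. (b - t) powr (alpha - 1) * Fp (P t + e *\<^sub>R (0, eta t, eta' t, Ceta t))))"
    proof -
      have key: "(1 / Gamma alpha * u \<le> 1 / Gamma alpha * v) = (u \<le> v)" for u v :: real
        using Gapos by (intro mult_le_cancel_left_pos) simp
      from y_extremal show ?thesis
      proof (elim disjE)
        assume H: "\<forall>z. admissible a b beta ya yb z \<longrightarrow> Jfun a b alpha beta F y \<le> Jfun a b alpha beta F z"
        have "integral {a..b} (\<lambda>t. (b - t) powr (alpha - 1) * Fp (P t))
                  \<le> integral {a..b} (\<lambda>t. (b - t) powr (alpha - 1) * Fp (P t + e *\<^sub>R (0, eta t, eta' t, Ceta t)))" for e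
          using H[rule_format, OF adm[of e]] unfolding Jz Jy key .
        then show ?thesis by blast
      next
        assume H: "\<forall>z. admissible a b beta ya yb z \<longrightarrow> Jfun a b alpha beta F y \<ge> Jfun a b alpha beta F z"
        have "integral {a..b} (\<lambda>t. (b - t) powr (alpha - 1) * Fp (P t))
                  \<ge> integral {a..b} (\<lambda>t. (b - t) powr (alpha - 1) * Fp (P t + e *\<^sub>R (0, eta t, eta' t, Ceta t)))" for e
          using H[rule_format, OF adm[of e]] unfolding Jz Jy key .
        then show ?thesis by blast
      qed
    qed
    have FC1: "(Fp has_derivative (\<lambda>(k1, k2, k3, k4). F1 q * k1 + F2 q * k2 + F3 q * k3 + F4 q * k4))
        (at q within {a..b} \<times> UNIV)" if "q \<in> {a..b} \<times> UNIV" for q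
    proof -
      have q: "q = (fst q, fst (snd q), fst (snd (snd q)), snd (snd (snd q)))" by simp
      have "fst q \<in> {a..b}" using that by auto
      from F_C1[OF this, of "fst (snd q)" "fst (snd (snd q))" "snd (snd (snd q))"]
      show ?thesis unfolding Fp_def by (subst (1 2 3 4 5) q) simp
    qed
    have FV: "integral {a..b} (\<lambda>t. (b - t) powr (alpha - 1) * (F2 (P t) * eta t + F3 (P t) * eta' t + F4 (P t) * Ceta t)) = 0"
    proof -
      have Pfst: "\<And>t. fst (P t) = t" unfolding P_def by simp
      show ?thesis by (rule first_variation[OF ab alpha(1) FC1 F_partials_cont(2,3,4) Pc Pfst etac eta'c Cetac ext])
    qed
    define A2 where "A2 = integral {a..b} (\<lambda>t. w t * (F2 (P t) * eta t))"
    define A3 where "A3 = integral {a..b} (\<lambda>t. w t * (F3 (P t) * eta' t))"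
    define A4 where "A4 = integral {a..b} (\<lambda>t. w t * (F4 (P t) * Ceta t))"
    have iA2: "(\<lambda>t. w t * (F2 (P t) * eta t)) integrable_on {a..b}"
      using FPc[OF F_partials_cont(2)] etac by (intro wci continuous_intros)
    have iA3: "(\<lambda>t. w t * (F3 (P t) * eta' t)) integrable_on {a..b}"
      using FPc[OF F_partials_cont(3)] eta'c by (intro wci continuous_intros)
    have iA4: "(\<lambda>t. w t * (F4 (P t) * Ceta t)) integrable_on {a..b}"
      using FPc[OF F_partials_cont(4)] Cetac by (intro wci continuous_intros)
    have sum0: "A2 + A3 + A4 = 0"
    proof -
      have "integral {a..b} (\<lambda>t. (b - t) powr (alpha - 1) * (F2 (P t) * eta t + F3 (P t) * eta' t + F4 (P t) * Ceta t))
          = integral {a..b} (\<lambda>t. w t * (F2 (P t) * eta t) + w t * (F3 (P t) * eta' t) + w t * (F4 (P t) * Ceta t))"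
        unfolding w_def by (simp add: algebra_simps)
      also have "\<dots> = A2 + A3 + A4" unfolding A2_def A3_def A4_def
        using integral_add[OF integrable_add[OF iA2 iA3] iA4] integral_add[OF iA2 iA3] by simp
      finally show ?thesis using FV by simp
    qed
    have cd_sub: "{c..d} \<subseteq> {a<..<b}" using acd by auto
    have A2eq: "A2 = integral {c..d} (\<lambda>t. eta t * (F2 (t, y t, dI a b y t, caputo a b beta y t) * (b - t) powr (alpha - 1)))"
    proof -
      have "A2 = integral {c..d} (\<lambda>t. w t * (F2 (P t) * eta t))"
        unfolding A2_def using acd
        by (intro integral_sub_interval) (auto simp: eta_def bump_zero)
      also have "\<dots> = integral {c..d} (\<lambda>t. eta t * (F2 (t, y t, dI a b y t, caputo a b beta y t) * (b - t) powr (alpha - 1)))"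
        by (rule integral_cong) (simp add: w_def PF algebra_simps)
      finally show ?thesis .
    qed
    have A3eq: "A3 = - integral {c..d} (\<lambda>t. eta t * deriv h3 t)"
    proof -
      have "A3 = integral {c..d} (\<lambda>t. w t * (F3 (P t) * eta' t))"
        unfolding A3_def using acd
        by (intro integral_sub_interval) (auto simp: eta'_def bump'_zero)
      also have "\<dots> = integral {c..d} (\<lambda>t. h3 t * eta' t)"
        by (rule integral_cong) (simp add: w_def PF h3_def algebra_simps)
      also have "\<dots> = - integral {c..d} (\<lambda>t. deriv h3 t * eta t)"
      proof (rule ibp_zero)
        show "c \<le> d" using acd by simp
        show "(h3 has_real_derivative deriv h3 x) (at x)" if "x \<in> {c..d}" for x
          using F3_diff that cd_sub unfolding h3_def[symmetric]
          by (auto simp: DERIV_deriv_iff_real_differentiable)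
        show "(eta has_real_derivative eta' x) (at x)" for x by (rule etaD)
        show "continuous_on {c..d} (deriv h3)" using dh3c cd_sub by (rule continuous_on_subset)
        show "continuous_on {c..d} eta'" by (rule eta'c)
        show "eta c = 0" "eta d = 0" unfolding eta_def using acd by (auto intro!: bump_zero)
      qed
      finally show ?thesis by (simp add: mult.commute)
    qed
    have A4eq: "A4 = integral {c..d} (\<lambda>t. eta t * rRL_deriv b beta g t)"
    proof -
      define G where "G = (\<lambda>t. F4 (P (max a (min b t))))"
      have Gc: "continuous_on UNIV G"
        unfolding G_def
        by (rule continuous_on_compose2[OF FPc[OF F_partials_cont(4)]]) (use ab in \<open>auto intro!: continuous_intros\<close>)
      have GP: "G t = F4 (P t)" if "t \<in> {a..b}" for t
      proof -
        have "max a (min b t) = t" using that by auto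
        then show ?thesis unfolding G_def by simp
      qed
      note fub = frac_fubini[OF ab beta alpha(1) eta'c Gc]
      have L: "integral {a..b} (\<lambda>t. ((b - t) powr (alpha - 1) * G t) * integral {a..t} (\<lambda>\<tau>. (t - \<tau>) powr (-beta) * eta' \<tau>))
             = Gamma (1 - beta) * A4"
      proof -
        have "A4 = integral {a..b} (\<lambda>t. (1 / Gamma (1 - beta)) * (((b - t) powr (alpha - 1) * G t) * integral {a..t} (\<lambda>\<tau>. (t - \<tau>) powr (-beta) * eta' \<tau>)))"
          unfolding A4_def by (rule integral_cong) (simp add: w_def GP Ceta_eq)
        also have "\<dots> = (1 / Gamma (1 - beta)) * integral {a..b} (\<lambda>t. ((b - t) powr (alpha - 1) * G t) * integral {a..t} (\<lambda>\<tau>. (t - \<tau>) powr (-beta) * eta' \<tau>))"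
          by (rule integral_mult_right)
        finally show ?thesis using G1pos by simp
      qed
      have Rr: "integral {a..b} (\<lambda>\<tau>. eta' \<tau> * integral {\<tau>..b} (\<lambda>t. (t - \<tau>) powr (-beta) * ((b - t) powr (alpha - 1) * G t)))
             = Gamma (1 - beta) * integral {a..b} (\<lambda>\<tau>. eta' \<tau> * R \<tau>)"
      proof -
        have "integral {a..b} (\<lambda>\<tau>. eta' \<tau> * integral {\<tau>..b} (\<lambda>t. (t - \<tau>) powr (-beta) * ((b - t) powr (alpha - 1) * G t)))
            = integral {a..b} (\<lambda>\<tau>. Gamma (1 - beta) * (eta' \<tau> * R \<tau>))"
        proof (rule integral_cong)
          fix \<tau> assume tau: "\<tau> \<in> {a..b}"
          have "integral {\<tau>..b} (\<lambda>t. (t - \<tau>) powr (-beta) * ((b - t) powr (alpha - 1) * G t))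
              = integral {\<tau>..b} (\<lambda>t. (t - \<tau>) powr (1 - beta - 1) * g t)"
            by (rule integral_cong) (use tau in \<open>auto simp: GP g_def PF\<close>)
          also have "\<dots> = Gamma (1 - beta) * R \<tau>"
            unfolding R_def rRL_int_def using G1pos by simp
          finally show "eta' \<tau> * integral {\<tau>..b} (\<lambda>t. (t - \<tau>) powr (-beta) * ((b - t) powr (alpha - 1) * G t))
              = Gamma (1 - beta) * (eta' \<tau> * R \<tau>)" by simp
        qed
        then show ?thesis by simp
      qed
      have A4R: "A4 = integral {a..b} (\<lambda>\<tau>. eta' \<tau> * R \<tau>)"
        using L Rr fub G1pos by simp
      also have "\<dots> = integral {c..d} (\<lambda>\<tau>. R \<tau> * eta' \<tau>)"
      proof -
        have "integral {a..b} (\<lambda>\<tau>. eta' \<tau> * R \<tau>) = integral {c..d} (\<lambda>\<tau>. eta' \<tau> * R \<tau>)"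
          using acd by (intro integral_sub_interval) (auto simp: eta'_def bump'_zero)
        then show ?thesis by (simp add: mult.commute)
      qed
      also have "\<dots> = - integral {c..d} (\<lambda>t. deriv R t * eta t)"
      proof (rule ibp_zero)
        show "c \<le> d" using acd by simp
        show "(R has_real_derivative deriv R x) (at x)" if "x \<in> {c..d}" for x
          using g_RL that cd_sub unfolding g_def[symmetric] R_def[symmetric]
          by (auto simp: DERIV_deriv_iff_real_differentiable)
        show "(eta has_real_derivative eta' x) (at x)" for x by (rule etaD)
        show "continuous_on {c..d} (deriv R)"
        proof -
          have "continuous_on {c..d} (\<lambda>t. - rRL_deriv b beta g t)"
            using rdc cd_sub by (intro continuous_intros) (rule continuous_on_subset)
          then show ?thesis by (simp add: rRL_deriv_def R_def)
        qed
        show "continuous_on {c..d} eta'" by (rule eta'c)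
        show "eta c = 0" "eta d = 0" unfolding eta_def using acd by (auto intro!: bump_zero)
      qed
      also have "\<dots> = integral {c..d} (\<lambda>t. eta t * rRL_deriv b beta g t)"
        unfolding rRL_deriv_def R_def by (simp add: mult.commute)
      finally show ?thesis .
    qed
    have Ecd: "continuous_on {c..d} E" using Ec cd_sub by (rule continuous_on_subset)
    have ic1: "(\<lambda>t. eta t * (F2 (t, y t, dI a b y t, caputo a b beta y t) * (b - t) powr (alpha - 1))) integrable_on {c..d}"
      by (rule integrable_continuous_real[OF continuous_on_mult[OF etac continuous_on_subset[OF F2w cd_sub]]])
    have ic2: "(\<lambda>t. eta t * deriv h3 t) integrable_on {c..d}"
      by (rule integrable_continuous_real[OF continuous_on_mult[OF etac continuous_on_subset[OF dh3c cd_sub]]])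
    have ic3: "(\<lambda>t. eta t * rRL_deriv b beta g t) integrable_on {c..d}"
      by (rule integrable_continuous_real[OF continuous_on_mult[OF etac continuous_on_subset[OF rdc cd_sub]]])
    have int0: "integral {c..d} (\<lambda>t. eta t * E t) = 0"
    proof -
      have "integral {c..d} (\<lambda>t. eta t * E t) = integral {c..d} (\<lambda>t. eta t * (F2 (t, y t, dI a b y t, caputo a b beta y t) * (b - t) powr (alpha - 1)) - eta t * deriv h3 t + eta t * rRL_deriv b beta g t)"
        unfolding E_def h3eq by (simp add: algebra_simps)
      also have "\<dots> = A2 + A3 + A4"
        unfolding A2eq A3eq A4eq using integral_add[OF integrable_diff[OF ic1 ic2] ic3] integral_diff[OF ic1 ic2] by simp
      finally show ?thesis using sum0 by simp
    qed
    have "integral {c..d} (\<lambda>t. eta t * E t * E t0) = 0" using int0 by simp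
    moreover have "continuous_on {c..d} (\<lambda>t. eta t * E t * E t0)"
      by (intro continuous_on_mult[OF continuous_on_mult[OF etac Ecd]] continuous_on_const)
    moreover have "\<And>t. t \<in> {c..d} \<Longrightarrow> 0 \<le> eta t * E t * E t0"
    proof -
      fix t assume t: "t \<in> {c..d}"
      have "0 \<le> eta t" unfolding eta_def bump_def by simp
      then show "0 \<le> eta t * E t * E t0" using Esign[OF t] by (simp add: mult.assoc)
    qed
    ultimately have "\<forall>t\<in>{c..d}. eta t * E t * E t0 = 0"
      using integral_eq_0_iff[of c d "\<lambda>t. eta t * E t * E t0"] acd by auto
    then have "eta t0 * E t0 * E t0 = 0" using acd by auto
    moreover have "eta t0 > 0" unfolding eta_def using acd by (intro bump_pos) auto
    ultimately show False using Et0 by simp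
  qed
  then show ?thesis unfolding E_def g_def .
qed

end
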